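(* Let $\mathbf{F}$ be a normed space of functions over a set $X$. Then $\mathbf{F}$ is reflexive if and only if $\mathbf{F}$ is regular and the closed linear span of the point evaluations $\{x_{\mathbf{F}}:x\in X\}$ equals $\mathbf{F}^*$.
   Context: A normed space of functions over a set $X$ is a linear subspace of the space $\mathcal{F}(X)$ of all functions $X\to\mathbb{C}$ with a norm for which each point evaluation $x_{\mathbf{F}}:f\mapsto f(x)$ is bounded. $\mathbf{F}$ is regular if its closed unit ball is closed in $\mathcal{F}(X)$ with respect to the topology of pointwise convergence on $X$ (equivalently, the pointwise closure of the unit ball of $\mathbf{F}$, taken as the unit ball of the space of positive multiples of its elements with the corresponding Minkowski norm, gives back $\mathbf{F}$ with its norm). *)

theory Defs
  imports "HOL-Analysis.Analysis"
begin

text \<open>A normed space of functions over the set X (rendered as the type 'x):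
  a complex linear subspace F of 'x \<Rightarrow> complex with a norm N on F such that
  every point evaluation f \<mapsto> f x is bounded.\<close>

definition normed_function_space :: "('x \<Rightarrow> complex) set \<Rightarrow> (('x \<Rightarrow> complex) \<Rightarrow> real) \<Rightarrow> bool" where
  "normed_function_space F N \<longleftrightarrow>
     (\<lambda>x. 0) \<in> F \<and>
     (\<forall>f\<in>F. \<forall>g\<in>F. (\<lambda>x. f x + g x) \<in> F) \<and>
     (\<forall>c. \<forall>f\<in>F. (\<lambda>x. c * f x) \<in> F) \<and>
     (\<forall>f\<in>F. 0 \<le> N f) \<and>
     (\<forall>f\<in>F. N f = 0 \<longleftrightarrow> f = (\<lambda>x. 0)) \<and>
     (\<forall>f\<in>F. \<forall>g\<in>F. N (\<lambda>x. f x + g x) \<le> N f + N g) \<and>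
     (\<forall>c. \<forall>f\<in>F. N (\<lambda>x. c * f x) = cmod c * N f) \<and>
     (\<forall>x. \<exists>C. \<forall>f\<in>F. cmod (f x) \<le> C * N f)"

text \<open>Dual space F*: bounded complex-linear functionals on F (values outside F irrelevant).\<close>

definition dual_space :: "('x \<Rightarrow> complex) set \<Rightarrow> (('x \<Rightarrow> complex) \<Rightarrow> real)
     \<Rightarrow> ((('x \<Rightarrow> complex) \<Rightarrow> complex) set)" where
  "dual_space F N = {\<phi>.
     (\<forall>f\<in>F. \<forall>g\<in>F. \<phi> (\<lambda>x. f x + g x) = \<phi> f + \<phi> g) \<and>
     (\<forall>c. \<forall>f\<in>F. \<phi> (\<lambda>x. c * f x) = c * \<phi> f) \<and>
     (\<exists>C. \<forall>f\<in>F. cmod (\<phi> f) \<le> C * N f)}"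

definition dual_norm :: "('x \<Rightarrow> complex) set \<Rightarrow> (('x \<Rightarrow> complex) \<Rightarrow> real)
     \<Rightarrow> (('x \<Rightarrow> complex) \<Rightarrow> complex) \<Rightarrow> real" where
  "dual_norm F N \<phi> = (SUP f\<in>{f\<in>F. N f \<le> 1}. cmod (\<phi> f))"

definition bidual_space :: "('x \<Rightarrow> complex) set \<Rightarrow> (('x \<Rightarrow> complex) \<Rightarrow> real)
     \<Rightarrow> (((('x \<Rightarrow> complex) \<Rightarrow> complex) \<Rightarrow> complex) set)" where
  "bidual_space F N = {\<Phi>.
     (\<forall>\<phi>\<in>dual_space F N. \<forall>\<psi>\<in>dual_space F N. \<Phi> (\<lambda>f. \<phi> f + \<psi> f) = \<Phi> \<phi> + \<Phi> \<psi>) \<and>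
     (\<forall>c. \<forall>\<phi>\<in>dual_space F N. \<Phi> (\<lambda>f. c * \<phi> f) = c * \<Phi> \<phi>) \<and>
     (\<exists>C. \<forall>\<phi>\<in>dual_space F N. cmod (\<Phi> \<phi>) \<le> C * dual_norm F N \<phi>)}"

definition reflexive_fs :: "('x \<Rightarrow> complex) set \<Rightarrow> (('x \<Rightarrow> complex) \<Rightarrow> real) \<Rightarrow> bool" where
  "reflexive_fs F N \<longleftrightarrow>
     (\<forall>\<Phi>\<in>bidual_space F N. \<exists>f\<in>F. \<forall>\<phi>\<in>dual_space F N. \<Phi> \<phi> = \<phi> f)"

text \<open>Regular: the closed unit ball is closed in the topology of pointwise convergence
  (the product topology on 'x \<Rightarrow> complex).\<close>

definition regular_fs :: "('x \<Rightarrow> complex) set \<Rightarrow> (('x \<Rightarrow> complex) \<Rightarrow> real) \<Rightarrow> bool" where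
  "regular_fs F N \<longleftrightarrow> closed {f\<in>F. N f \<le> 1}"

definition eval_closed_span :: "('x \<Rightarrow> complex) set \<Rightarrow> (('x \<Rightarrow> complex) \<Rightarrow> real)
     \<Rightarrow> ((('x \<Rightarrow> complex) \<Rightarrow> complex) set)" where
  "eval_closed_span F N = {\<phi>\<in>dual_space F N. \<forall>\<epsilon>>0. \<exists>S a. finite S \<and>
      dual_norm F N (\<lambda>f. \<phi> f - (\<Sum>x\<in>S. a x * f x)) < \<epsilon>}"

end

theory Submission
  imports Defs "HOL-Library.Function_Algebras"
begin

definition sm :: "complex \<Rightarrow> ('a \<Rightarrow> complex) \<Rightarrow> ('a \<Rightarrow> complex)" where
  "sm c f = (\<lambda>x. c * f x)"

lemma sm_apply[simp]: "sm c f x = c * f x" by (simp add: sm_def)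
lemma sm_add: "sm c (f + g) = sm c f + sm c g" by (simp add: fun_eq_iff algebra_simps)
lemma sm_add2: "sm (a + b) f = sm a f + sm b f" by (simp add: fun_eq_iff algebra_simps)
lemma sm_sm: "sm a (sm b f) = sm (a * b) f" by (simp add: fun_eq_iff algebra_simps)
lemma sm_1[simp]: "sm 1 f = f" by (simp add: fun_eq_iff)
lemma sm_0[simp]: "sm 0 f = 0" by (simp add: fun_eq_iff)
lemma sm_zero[simp]: "sm c 0 = 0" by (simp add: fun_eq_iff)
lemma sm_m1: "sm (-1) f = - f" by (simp add: fun_eq_iff)

definition subsp :: "('a \<Rightarrow> complex) set \<Rightarrow> bool" where
  "subsp V \<longleftrightarrow> 0 \<in> V \<and> (\<forall>f\<in>V. \<forall>g\<in>V. f + g \<in> V) \<and> (\<forall>c. \<forall>f\<in>V. sm c f \<in> V)"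

definition snorm :: "('a \<Rightarrow> complex) set \<Rightarrow> (('a \<Rightarrow> complex) \<Rightarrow> real) \<Rightarrow> bool" where
  "snorm V p \<longleftrightarrow> (\<forall>f\<in>V. \<forall>g\<in>V. p (f + g) \<le> p f + p g) \<and> (\<forall>c. \<forall>f\<in>V. p (sm c f) = cmod c * p f)"

definition clin :: "('a \<Rightarrow> complex) set \<Rightarrow> (('a \<Rightarrow> complex) \<Rightarrow> complex) \<Rightarrow> bool" where
  "clin V \<phi> \<longleftrightarrow> (\<forall>f\<in>V. \<forall>g\<in>V. \<phi> (f + g) = \<phi> f + \<phi> g) \<and> (\<forall>c. \<forall>f\<in>V. \<phi> (sm c f) = c * \<phi> f)"

lemma subsp_minus: "subsp V \<Longrightarrow> f \<in> V \<Longrightarrow> g \<in> V \<Longrightarrow> f - g \<in> V"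
  unfolding subsp_def by (metis diff_conv_add_uminus sm_m1)

lemma snorm_nonneg: assumes "snorm V p" "f \<in> V" "subsp V" shows "0 \<le> p f"
proof -
  have "-f \<in> V" using assms by (metis subsp_def sm_m1)
  have "p 0 = 0" using assms unfolding snorm_def by (metis sm_0 norm_zero mult_zero_left)
  moreover have "p (f + - f) \<le> p f + p (-f)" using assms \<open>-f \<in> V\<close> unfolding snorm_def by blast
  moreover have "p (-f) = p f" using assms unfolding snorm_def by (metis sm_m1 norm_minus_cancel norm_one mult_1)
  ultimately show ?thesis by simp
qed

definition good where
  "good V p M u0 G \<longleftrightarrow>
   (\<forall>f r s. (f,r)\<in>G \<longrightarrow> (f,s)\<in>G \<longrightarrow> r = s) \<and>
   (\<forall>f r g s. (f,r)\<in>G \<longrightarrow> (g,s)\<in>G \<longrightarrow> (f+g, r+s)\<in>G) \<and>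
   (\<forall>f r t. (f,r)\<in>G \<longrightarrow> (sm (of_real t) f, t*r)\<in>G) \<and>
   (\<forall>f r. (f,r)\<in>G \<longrightarrow> f\<in>V \<and> r \<le> p f) \<and>
   (\<forall>f\<in>M. (f, u0 f)\<in>G)"

lemma goodD:
  assumes "good V p M u0 G"
  shows "\<And>f r s. (f,r)\<in>G \<Longrightarrow> (f,s)\<in>G \<Longrightarrow> r = s"
    "\<And>f r g s. (f,r)\<in>G \<Longrightarrow> (g,s)\<in>G \<Longrightarrow> (f+g, r+s)\<in>G"
    "\<And>f r t. (f,r)\<in>G \<Longrightarrow> (sm (of_real t) f, t*r)\<in>G"
    "\<And>f r. (f,r)\<in>G \<Longrightarrow> f\<in>V"
    "\<And>f r. (f,r)\<in>G \<Longrightarrow> r \<le> p f"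
    "\<And>f. f\<in>M \<Longrightarrow> (f, u0 f)\<in>G"
  using assms unfolding good_def by blast+

lemma good_chain:
  assumes "C \<in> chains {G. good V p M u0 G}" "C \<noteq> {}"
  shows "good V p M u0 (\<Union>C)"
proof -
  have ch: "\<And>X Y. X \<in> C \<Longrightarrow> Y \<in> C \<Longrightarrow> X \<subseteq> Y \<or> Y \<subseteq> X" and gd: "\<And>X. X \<in> C \<Longrightarrow> good V p M u0 X"
    using assms(1) unfolding chains_def chain_subset_def by auto
  show ?thesis unfolding good_def
  proof (intro conjI allI impI ballI)
    fix f r s assume "(f,r) \<in> \<Union>C" "(f,s) \<in> \<Union>C"
    then obtain X Y where XY: "X\<in>C" "Y\<in>C" "(f,r)\<in>X" "(f,s)\<in>Y" by auto
    show "r = s"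
    proof (cases "X \<subseteq> Y")
      case True then show ?thesis using XY goodD(1)[OF gd[of Y]] by blast
    next
      case False then have "Y \<subseteq> X" using ch XY by blast
      then show ?thesis using XY goodD(1)[OF gd[of X]] by blast
    qed
  next
    fix f r g s assume "(f,r) \<in> \<Union>C" "(g,s) \<in> \<Union>C"
    then obtain X Y where XY: "X\<in>C" "Y\<in>C" "(f,r)\<in>X" "(g,s)\<in>Y" by auto
    show "(f+g, r+s) \<in> \<Union>C"
    proof (cases "X \<subseteq> Y")
      case True then show ?thesis using XY goodD(2)[OF gd[of Y]] by blast
    next
      case False then have "Y \<subseteq> X" using ch XY by blast
      then show ?thesis using XY goodD(2)[OF gd[of X]] by blast
    qed
  next
    fix f r t assume "(f,r) \<in> \<Union>C"
    then show "(sm (of_real t) f, t*r) \<in> \<Union>C" using goodD(3)[OF gd] by blast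
  next
    fix f r assume "(f,r) \<in> \<Union>C"
    then show "f \<in> V" "r \<le> p f" using goodD(4,5)[OF gd] by blast+
  next
    fix f assume "f \<in> M"
    obtain X where "X \<in> C" using assms(2) by auto
    then show "(f, u0 f) \<in> \<Union>C" using goodD(6)[OF gd] \<open>f\<in>M\<close> by blast
  qed
qed

lemma snormD:
  assumes "snorm V p" shows "\<And>f g. f\<in>V \<Longrightarrow> g\<in>V \<Longrightarrow> p (f + g) \<le> p f + p g"
    "\<And>c f. f\<in>V \<Longrightarrow> p (sm c f) = cmod c * p f"
  using assms unfolding snorm_def by blast+

lemma subspD:
  assumes "subsp V" shows "0 \<in> V" "\<And>f g. f\<in>V \<Longrightarrow> g\<in>V \<Longrightarrow> f + g \<in> V"
    "\<And>c f. f\<in>V \<Longrightarrow> sm c f \<in> V" "\<And>f. f \<in> V \<Longrightarrow> - f \<in> V"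
    "\<And>f g. f\<in>V \<Longrightarrow> g\<in>V \<Longrightarrow> f - g \<in> V"
  using assms unfolding subsp_def apply blast+
  apply (metis assms sm_m1 subsp_def)
  by (simp add: assms subsp_minus)

lemma sm_real_abs: "f \<in> V \<Longrightarrow> snorm V p \<Longrightarrow> p (sm (of_real t) f) = \<bar>t\<bar> * p f"
  by (simp add: snormD)

lemma real_HB:
  assumes V: "subsp V" and p: "snorm V p" and MV: "M \<subseteq> V" and Ms: "subsp M"
   and u0add: "\<forall>f\<in>M. \<forall>g\<in>M. u0 (f+g) = u0 f + u0 g"
   and u0sm: "\<forall>t. \<forall>f\<in>M. u0 (sm (of_real t) f) = t * u0 f"
   and u0p: "\<forall>f\<in>M. u0 f \<le> p f"
  shows "\<exists>u. (\<forall>f\<in>V. \<forall>g\<in>V. u (f+g) = u f + u g) \<and> (\<forall>t. \<forall>f\<in>V. u (sm (of_real t) f) = t * u f)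
           \<and> (\<forall>f\<in>M. u f = u0 f) \<and> (\<forall>f\<in>V. u f \<le> p f)"
proof -
  let ?A = "{G. good V p M u0 G}"
  define G0 where "G0 = {(f, u0 f) | f. f \<in> M}"
  have G0: "good V p M u0 G0"
    unfolding good_def
  proof (intro conjI allI impI ballI)
    fix f r s assume "(f,r) \<in> G0" "(f,s) \<in> G0" then show "r = s" unfolding G0_def by blast
  next
    fix f r g s assume "(f,r) \<in> G0" "(g,s) \<in> G0"
    then have "f \<in> M" "g \<in> M" "r = u0 f" "s = u0 g" unfolding G0_def by blast+
    then show "(f + g, r + s) \<in> G0" unfolding G0_def using u0add subspD(2)[OF Ms] by fastforce
  next
    fix f r t assume "(f,r) \<in> G0"
    then have "f \<in> M" "r = u0 f" unfolding G0_def by blast+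
    then show "(sm (of_real t) f, t * r) \<in> G0" unfolding G0_def using u0sm subspD(3)[OF Ms] by fastforce
  next
    fix f r assume "(f,r) \<in> G0"
    then have "f \<in> M" "r = u0 f" unfolding G0_def by blast+
    then show "f \<in> V" "r \<le> p f" using MV u0p by blast+
  next
    fix f assume "f \<in> M" then show "(f, u0 f) \<in> G0" unfolding G0_def by blast
  qed
  have "\<forall>C\<in>chains ?A. \<exists>U\<in>?A. \<forall>X\<in>C. X \<subseteq> U"
  proof
    fix C assume C: "C \<in> chains ?A"
    show "\<exists>U\<in>?A. \<forall>X\<in>C. X \<subseteq> U"
    proof (cases "C = {}")
      case True then show ?thesis using G0 by blast
    next
      case False then show ?thesis using good_chain[OF C False] by blast
    qed
  qed
  from Zorn_Lemma2[OF this] obtain G where GA: "G \<in> ?A" and max: "\<forall>X\<in>?A. G \<subseteq> X \<longrightarrow> X = G"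
    by blast
  have gG: "good V p M u0 G" using GA by simp
  note g = goodD[OF gG]
  have u00: "u0 0 = 0" using u0sm subspD(1)[OF Ms] by (metis mult_zero_left of_real_0 sm_0)
  have G00: "(0, 0) \<in> G" using g(6)[OF subspD(1)[OF Ms]] u00 by simp
  have Gneg: "(- f, - r) \<in> G" if "(f, r) \<in> G" for f r
    using g(3)[OF that, of "-1"] by (simp add: sm_m1)
  have Gsc: "(sm (of_real t) f, t * r) \<in> G" if "(f, r) \<in> G" for f r t using g(3)[OF that] .
  have full: "\<forall>h\<in>V. \<exists>r. (h,r)\<in>G"
  proof (rule ccontr)
    assume "\<not> ?thesis"
    then obtain h where hV: "h \<in> V" and hG: "\<And>r. (h, r) \<notin> G" by blast
    define S where "S = {r - p (f - h) | f r. (f,r)\<in>G}"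
    have key: "ra - p (a - h) \<le> p (b + h) - rb" if "(a,ra)\<in>G" "(b,rb)\<in>G" for a ra b rb
    proof -
      have aV: "a \<in> V" and bV: "b \<in> V" using g(4) that by blast+
      have 1: "a - h \<in> V" by (rule subspD(5)[OF V aV hV])
      have 2: "b + h \<in> V" by (rule subspD(2)[OF V bV hV])
      have "ra + rb \<le> p (a + b)" using g(5)[OF g(2)[OF that]] .
      also have "a + b = (a - h) + (b + h)" by simp
      also have "p ((a - h) + (b + h)) \<le> p (a - h) + p (b + h)"
        by (rule snormD(1)[OF p 1 2])
      finally show ?thesis by simp
    qed
    define c where "c = Sup S"
    have Sne: "S \<noteq> {}" using G00 unfolding S_def by blast
    have Sbdd: "bdd_above S"
    proof (rule bdd_aboveI)
      fix x assume "x \<in> S"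
      then obtain f r where "x = r - p (f - h)" "(f,r)\<in>G" unfolding S_def by blast
      then show "x \<le> p (0 + h) - 0" using key[OF _ G00] by simp
    qed
    have c_up: "r - p (f - h) \<le> c" if "(f,r)\<in>G" for f r
    proof -
      have "r - p (f - h) \<in> S" unfolding S_def using that by blast
      then show ?thesis unfolding c_def by (rule cSup_upper[OF _ Sbdd])
    qed
    have c_low: "c \<le> p (b + h) - rb" if "(b,rb)\<in>G" for b rb
      unfolding c_def
    proof (rule cSup_least[OF Sne])
      fix x assume "x \<in> S"
      then obtain f r where "x = r - p (f - h)" "(f,r)\<in>G" unfolding S_def by blast
      then show "x \<le> p (b + h) - rb" using key[OF _ that] by simp
    qed
    define G' where "G' = {(f + sm (of_real t) h, r + t*c) | f r t. (f,r)\<in>G}"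
    have memG': "(f + sm (of_real t) h, r + t*c) \<in> G'" if "(f,r)\<in>G" for f r t
      unfolding G'_def using that by blast
    have bound: "r + t * c \<le> p (f + sm (of_real t) h)" if fr: "(f,r)\<in>G" for f r t
    proof -
      have fV: "f \<in> V" using g(4) fr by blast
      consider "t = 0" | "t > 0" | "t < 0" by linarith
      then show ?thesis
      proof cases
        case 1 then show ?thesis using g(5)[OF fr] by simp
      next
        case 2
        have *: "(sm (of_real (1/t)) f, (1/t) * r) \<in> G" using Gsc[OF fr] .
        have XV: "sm (of_real (1/t)) f + h \<in> V" using subspD(2)[OF V subspD(3)[OF V fV] hV] .
        have "c \<le> p (sm (of_real (1/t)) f + h) - (1/t) * r" using c_low[OF *] .
        then have "t * c \<le> t * (p (sm (of_real (1/t)) f + h) - (1/t) * r)"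
          by (rule mult_left_mono) (use 2 in simp)
        also have "\<dots> = t * p (sm (of_real (1/t)) f + h) - r" using 2 by (simp add: right_diff_distrib)
        also have "t * p (sm (of_real (1/t)) f + h) = p (sm (of_real t) (sm (of_real (1/t)) f + h))"
          using sm_real_abs[OF XV p] 2 by simp
        also have "sm (of_real t) (sm (of_real (1/t)) f + h) = f + sm (of_real t) h"
          using 2 by (simp add: fun_eq_iff field_simps)
        finally show ?thesis by linarith
      next
        case 3
        define s where "s = - t"
        have s: "s > 0" using 3 s_def by simp
        have *: "(sm (of_real (1/s)) f, (1/s) * r) \<in> G" using Gsc[OF fr] .
        have XV: "sm (of_real (1/s)) f - h \<in> V" using subspD(5)[OF V subspD(3)[OF V fV] hV] .
        have "(1/s) * r - p (sm (of_real (1/s)) f - h) \<le> c" using c_up[OF *] .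
        then have "s * ((1/s) * r - p (sm (of_real (1/s)) f - h)) \<le> s * c"
          by (rule mult_left_mono) (use s in simp)
        then have "r - s * p (sm (of_real (1/s)) f - h) \<le> s * c" using s
          by (simp add: right_diff_distrib)
        also have "s * p (sm (of_real (1/s)) f - h) = p (sm (of_real s) (sm (of_real (1/s)) f - h))"
          using sm_real_abs[OF XV p] s by simp
        also have "sm (of_real s) (sm (of_real (1/s)) f - h) = f + sm (of_real t) h"
          using s s_def by (simp add: fun_eq_iff field_simps)
        finally have X: "r - p (f + sm (of_real t) h) \<le> s * c" .
        have "s * c = - (t * c)" by (simp add: s_def)
        then show ?thesis using X by linarith
      qed
    qed
    have gG': "good V p M u0 G'"
      unfolding good_def
    proof (intro conjI allI impI ballI)
      fix F R S assume "(F,R) \<in> G'" "(F,S) \<in> G'"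
      then obtain f r t f' r' t' where e: "F = f + sm (of_real t) h" "R = r + t*c" "(f,r)\<in>G"
        "F = f' + sm (of_real t') h" "S = r' + t'*c" "(f',r')\<in>G"
        unfolding G'_def by blast
      have eq: "f + sm (of_real t) h = f' + sm (of_real t') h" using e(1,4) by simp
      have "t = t'"
      proof (rule ccontr)
        assume ne: "t \<noteq> t'"
        have "(f' + - f, r' + - r) \<in> G" using g(2)[OF e(6) Gneg[OF e(3)]] .
        then have "(sm (of_real (1/(t - t'))) (f' + - f), (1/(t-t')) * (r' + - r)) \<in> G" by (rule Gsc)
        moreover have "sm (of_real (1/(t - t'))) (f' + - f) = h"
        proof -
          have "f' + - f = sm (of_real (t - t')) h" using eq
            by (simp add: fun_eq_iff algebra_simps)
          then show ?thesis using ne by (simp add: sm_sm flip: of_real_mult)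
        qed
        ultimately show False using hG by simp
      qed
      then have "f = f'" using eq by simp
      then have "r = r'" using g(1) e(3,6) by blast
      then show "R = S" using e \<open>t = t'\<close> by simp
    next
      fix F R G2 R2 assume "(F,R) \<in> G'" "(G2,R2) \<in> G'"
      then obtain f r t f' r' t' where e: "F = f + sm (of_real t) h" "R = r + t*c" "(f,r)\<in>G"
        "G2 = f' + sm (of_real t') h" "R2 = r' + t'*c" "(f',r')\<in>G"
        unfolding G'_def by blast
      have "(f + f' + sm (of_real (t + t')) h, (r + r') + (t + t') * c) \<in> G'"
        by (rule memG'[OF g(2)[OF e(3,6)]])
      moreover have "f + f' + sm (of_real (t + t')) h = F + G2" using e by (simp add: fun_eq_iff algebra_simps)
      moreover have "(r + r') + (t + t') * c = R + R2" using e by (simp add: algebra_simps)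
      ultimately show "(F + G2, R + R2) \<in> G'" by simp
    next
      fix F R a assume "(F,R) \<in> G'"
      then obtain f r t where e: "F = f + sm (of_real t) h" "R = r + t*c" "(f,r)\<in>G"
        unfolding G'_def by blast
      have "(sm (of_real a) f + sm (of_real (a * t)) h, a * r + (a * t) * c) \<in> G'"
        by (rule memG'[OF Gsc[OF e(3)]])
      moreover have "sm (of_real a) f + sm (of_real (a * t)) h = sm (of_real a) F" using e by (simp add: fun_eq_iff algebra_simps)
      moreover have "a * r + (a * t) * c = a * R" using e by (simp add: algebra_simps)
      ultimately show "(sm (of_real a) F, a * R) \<in> G'" by simp
    next
      fix F R assume "(F,R) \<in> G'"
      then obtain f r t where e: "F = f + sm (of_real t) h" "R = r + t*c" "(f,r)\<in>G"
        unfolding G'_def by blast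
      have "f \<in> V" using g(4)[OF e(3)] .
      then show "F \<in> V" using e(1) subspD(2)[OF V _ subspD(3)[OF V hV]] by simp
      show "R \<le> p F" using e bound[OF e(3)] by simp
    next
      fix f assume "f \<in> M"
      then show "(f, u0 f) \<in> G'" using memG'[OF g(6)[OF \<open>f\<in>M\<close>], of 0] by simp
    qed
    have "G \<subseteq> G'"
    proof
      fix x assume "x \<in> G" then obtain f r where "x = (f,r)" "(f,r)\<in>G" by (cases x) auto
      then show "x \<in> G'" using memG'[of f r 0] by simp
    qed
    moreover have "G' \<in> ?A" using gG' by simp
    ultimately have "G' = G" using max by blast
    moreover have "(h, c) \<in> G'" using memG'[OF G00, of 1] by simp
    ultimately show False using hG by simp
  qed
  from bchoice[OF full] obtain u where uG': "\<forall>h\<in>V. (h, u h) \<in> G" by blast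
  have uG: "(f, u f) \<in> G" if "f \<in> V" for f using uG' that by blast
  have uval: "u f = r" if "(f,r)\<in>G" for f r
    using g(1)[OF uG[OF g(4)[OF that]] that] .
  show ?thesis
  proof (intro exI conjI ballI allI)
    fix f g assume "f \<in> V" "g \<in> V"
    then show "u (f + g) = u f + u g" using uval[OF goodD(2)[OF gG uG uG]] by blast
  next
    fix t f assume "f \<in> V"
    then show "u (sm (of_real t) f) = t * u f" using uval[OF Gsc[OF uG]] by blast
  next
    fix f assume "f \<in> M" then show "u f = u0 f" using uval[OF g(6)] by blast
  next
    fix f assume "f \<in> V" then show "u f \<le> p f" using g(5)[OF uG] by blast
  qed
qed

lemma complex_HB:
  assumes V: "subsp V" and p: "snorm V p" and MV: "M \<subseteq> V" and Ms: "subsp M"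
    and phi0: "clin M \<phi>0" and bd: "\<forall>f\<in>M. cmod (\<phi>0 f) \<le> p f"
  shows "\<exists>\<phi>. clin V \<phi> \<and> (\<forall>f\<in>M. \<phi> f = \<phi>0 f) \<and> (\<forall>f\<in>V. cmod (\<phi> f) \<le> p f)"
proof -
  have p0add: "\<phi>0 (f + g) = \<phi>0 f + \<phi>0 g" if "f \<in> M" "g \<in> M" for f g
    using phi0 that unfolding clin_def by blast
  have p0sm: "\<phi>0 (sm c f) = c * \<phi>0 f" if "f \<in> M" for c f
    using phi0 that unfolding clin_def by blast
  have "\<forall>f\<in>M. \<forall>g\<in>M. Re (\<phi>0 (f+g)) = Re (\<phi>0 f) + Re (\<phi>0 g)" using p0add by simp
  moreover have "\<forall>t. \<forall>f\<in>M. Re (\<phi>0 (sm (of_real t) f)) = t * Re (\<phi>0 f)" using p0sm by simp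
  moreover have "\<forall>f\<in>M. Re (\<phi>0 f) \<le> p f" using bd complex_Re_le_cmod order_trans by blast
  ultimately obtain u where uadd: "\<forall>f\<in>V. \<forall>g\<in>V. u (f+g) = u f + u g"
    and usm: "\<forall>t. \<forall>f\<in>V. u (sm (of_real t) f) = t * u f"
    and uM: "\<forall>f\<in>M. u f = Re (\<phi>0 f)" and up: "\<forall>f\<in>V. u f \<le> p f"
    using real_HB[OF V p MV Ms, of "\<lambda>f. Re (\<phi>0 f)"] by blast
  have ucx: "u (sm c f) = Re c * u f + Im c * u (sm \<i> f)" if f: "f \<in> V" for c f
  proof -
    have "sm c f = sm (of_real (Re c)) f + sm (of_real (Im c)) (sm \<i> f)"
      by (simp add: fun_eq_iff algebra_simps) (metis complex_eq distrib_right mult.assoc mult.commute)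
    moreover have "sm \<i> f \<in> V" using subspD(3)[OF V f] .
    ultimately show ?thesis
      using uadd usm f subspD(3)[OF V] by simp
  qed
  define \<phi> where "\<phi> f = complex_of_real (u f) - \<i> * complex_of_real (u (sm \<i> f))" for f
  have ReP: "Re (\<phi> f) = u f" for f by (simp add: \<phi>_def)
  have clinV: "clin V \<phi>"
    unfolding clin_def
  proof (intro conjI ballI allI)
    fix f g assume f: "f \<in> V" and g: "g \<in> V"
    show "\<phi> (f + g) = \<phi> f + \<phi> g"
      using uadd f g subspD(3)[OF V] by (simp add: \<phi>_def sm_add algebra_simps)
  next
    fix c f assume f: "f \<in> V"
    have 1: "u (sm c f) = Re c * u f + Im c * u (sm \<i> f)" by (rule ucx[OF f])
    have "u (sm \<i> (sm c f)) = u (sm (\<i> * c) f)" by (simp add: sm_sm)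
    also have "\<dots> = - Im c * u f + Re c * u (sm \<i> f)" using ucx[OF f, of "\<i> * c"] by simp
    finally have 2: "u (sm \<i> (sm c f)) = - Im c * u f + Re c * u (sm \<i> f)" .
    show "\<phi> (sm c f) = c * \<phi> f"
      unfolding \<phi>_def 1 2 by (simp add: complex_eq_iff algebra_simps)
  qed
  have agree: "\<phi> f = \<phi>0 f" if f: "f \<in> M" for f
  proof -
    have "sm \<i> f \<in> M" using subspD(3)[OF Ms f] .
    then have "u (sm \<i> f) = Re (\<i> * \<phi>0 f)" using uM p0sm[OF f] by simp
    then show ?thesis using uM f by (simp add: \<phi>_def complex_eq_iff)
  qed
  have bound: "cmod (\<phi> f) \<le> p f" if f: "f \<in> V" for f
  proof (cases "\<phi> f = 0")
    case True then show ?thesis using snorm_nonneg[OF p f V] by simp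
  next
    case False
    define z where "z = \<phi> f"
    define w where "w = cnj z / complex_of_real (cmod z)"
    have z0: "z \<noteq> 0" using False z_def by simp
    have zz: "z * cnj z = complex_of_real (cmod z) * complex_of_real (cmod z)"
      by (metis complex_norm_square of_real_mult power2_eq_square)
    have wz: "w * z = complex_of_real (cmod z)"
      using z0 zz by (simp add: w_def field_simps)
    have cw: "cmod w = 1" using z0 by (simp add: w_def norm_divide)
    have "\<phi> (sm w f) = w * z" using clinV f unfolding clin_def z_def by blast
    then have "cmod z = u (sm w f)" using wz ReP[of "sm w f"] by simp
    also have "\<dots> \<le> p (sm w f)" using up subspD(3)[OF V f] by blast
    also have "\<dots> = p f" using snormD(2)[OF p f] cw by simp
    finally show ?thesis by (simp add: z_def)
  qed
  show ?thesis using clinV agree bound by blast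
qed

definition comb :: "'x set \<Rightarrow> ('x \<Rightarrow> complex) \<Rightarrow> ('x \<Rightarrow> complex) \<Rightarrow> complex" where
  "comb S a = (\<lambda>f. \<Sum>y\<in>S. a y * f y)"

lemma nfsD:
  assumes "normed_function_space F N"
  shows "subsp F" "snorm F N" "\<And>f. f \<in> F \<Longrightarrow> 0 \<le> N f" "\<And>f. f \<in> F \<Longrightarrow> N f = 0 \<longleftrightarrow> f = 0"
    "\<exists>C. \<forall>x. \<forall>f\<in>F. cmod (f x) \<le> C x * N f"
proof -
  show "subsp F" using assms unfolding normed_function_space_def subsp_def sm_def plus_fun_def zero_fun_def
    by simp
  show "snorm F N" using assms unfolding normed_function_space_def snorm_def sm_def plus_fun_def
    by simp
  show "\<And>f. f \<in> F \<Longrightarrow> 0 \<le> N f" using assms unfolding normed_function_space_def by blast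
  show "\<And>f. f \<in> F \<Longrightarrow> N f = 0 \<longleftrightarrow> f = 0" using assms unfolding normed_function_space_def
    by (simp add: zero_fun_def)
  have "\<forall>x. \<exists>C. \<forall>f\<in>F. cmod (f x) \<le> C * N f" using assms unfolding normed_function_space_def by blast
  then show "\<exists>C. \<forall>x. \<forall>f\<in>F. cmod (f x) \<le> C x * N f" by (rule choice)
qed

lemma dual_space_iff: "\<phi> \<in> dual_space F N \<longleftrightarrow> clin F \<phi> \<and> (\<exists>C. \<forall>f\<in>F. cmod (\<phi> f) \<le> C * N f)"
  unfolding dual_space_def clin_def sm_def plus_fun_def by simp

lemma bidual_space_iff: "\<Phi> \<in> bidual_space F N \<longleftrightarrow> clin (dual_space F N) \<Phi> \<and>
   (\<exists>C. \<forall>\<phi>\<in>dual_space F N. cmod (\<Phi> \<phi>) \<le> C * dual_norm F N \<phi>)"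
  unfolding bidual_space_def clin_def sm_def plus_fun_def by simp

lemma clinD: assumes "clin V \<phi>"
  shows "\<And>f g. f \<in> V \<Longrightarrow> g \<in> V \<Longrightarrow> \<phi> (f + g) = \<phi> f + \<phi> g" "\<And>c f. f \<in> V \<Longrightarrow> \<phi> (sm c f) = c * \<phi> f"
  using assms unfolding clin_def by blast+

lemma clin_zero: "clin V \<phi> \<Longrightarrow> subsp V \<Longrightarrow> \<phi> 0 = 0"
  using clinD(2)[of V \<phi> 0 0] subspD(1)[of V] by simp

lemma clin_minus: "clin V \<phi> \<Longrightarrow> subsp V \<Longrightarrow> f \<in> V \<Longrightarrow> g \<in> V \<Longrightarrow> \<phi> (f - g) = \<phi> f - \<phi> g"
proof -
  assume a: "clin V \<phi>" "subsp V" "f \<in> V" "g \<in> V"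
  have e: "f - g = f + sm (-1) g" by (simp add: fun_eq_iff)
  have A: "\<phi> (f + sm (-1) g) = \<phi> f + \<phi> (sm (-1) g)" using clinD(1)[OF a(1) a(3) subspD(3)[OF a(2) a(4)]] .
  have B: "\<phi> (sm (-1) g) = - \<phi> g" using clinD(2)[OF a(1) a(4)] by simp
  show ?thesis by (simp only: e A B) simp
qed

lemma clin_eval: "clin V (\<lambda>f. f x)" unfolding clin_def by simp

lemma clin_comb: "clin V (comb S a)"
  unfolding clin_def comb_def by (simp add: sum.distrib sum_distrib_left algebra_simps)

lemma clin_linear_eval: "clin V (\<lambda>\<psi>. \<psi> g)" unfolding clin_def by simp

lemma nfs_zero: "normed_function_space F N \<Longrightarrow> 0 \<in> F \<and> N 0 = 0"
  using nfsD(1,4)[of F N] subspD(1) by blast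

lemma nfs_unit_ne: "normed_function_space F N \<Longrightarrow> 0 \<in> {f\<in>F. N f \<le> 1}"
  using nfs_zero by fastforce

lemma DN_least:
  assumes nfs: "normed_function_space F N" and K: "0 \<le> K" and b: "\<forall>f\<in>F. cmod (\<psi> f) \<le> K * N f"
  shows "dual_norm F N \<psi> \<le> K"
  unfolding dual_norm_def
proof (rule cSUP_least)
  show "{f\<in>F. N f \<le> 1} \<noteq> {}" using nfs_unit_ne[OF nfs] by blast
next
  fix f assume "f \<in> {f\<in>F. N f \<le> 1}"
  then have "f \<in> F" "N f \<le> 1" by auto
  then have "cmod (\<psi> f) \<le> K * N f" using b by blast
  also have "\<dots> \<le> K * 1" using K \<open>N f \<le> 1\<close> by (rule mult_left_mono[rotated])
  finally show "cmod (\<psi> f) \<le> K" by simp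
qed

lemma DN_facts:
  assumes nfs: "normed_function_space F N" and psi: "\<psi> \<in> dual_space F N"
  shows "bdd_above ((\<lambda>f. cmod (\<psi> f)) ` {f\<in>F. N f \<le> 1})"
    and "\<And>f. f \<in> F \<Longrightarrow> cmod (\<psi> f) \<le> dual_norm F N \<psi> * N f"
    and "0 \<le> dual_norm F N \<psi>"
proof -
  obtain C where C: "\<forall>f\<in>F. cmod (\<psi> f) \<le> C * N f" and cl: "clin F \<psi>"
    using psi unfolding dual_space_iff by blast
  have Fs: "subsp F" using nfsD(1)[OF nfs] .
  show bdd: "bdd_above ((\<lambda>f. cmod (\<psi> f)) ` {f\<in>F. N f \<le> 1})"
  proof (rule bdd_aboveI2)
    fix f assume "f \<in> {f\<in>F. N f \<le> 1}"
    then have f: "f \<in> F" "N f \<le> 1" by auto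
    have "cmod (\<psi> f) \<le> C * N f" using C f by blast
    also have "\<dots> \<le> max C 0 * N f" using nfsD(3)[OF nfs f(1)] by (intro mult_right_mono) auto
    also have "\<dots> \<le> max C 0 * 1" using f(2) by (intro mult_left_mono) auto
    finally show "cmod (\<psi> f) \<le> max C 0" by simp
  qed
  have p0: "\<psi> 0 = 0" using clin_zero[OF cl Fs] .
  show "0 \<le> dual_norm F N \<psi>"
  proof -
    have "cmod (\<psi> 0) \<le> dual_norm F N \<psi>" unfolding dual_norm_def
      by (rule cSUP_upper[OF nfs_unit_ne[OF nfs] bdd])
    then show ?thesis using p0 by simp
  qed
  fix f assume f: "f \<in> F"
  show "cmod (\<psi> f) \<le> dual_norm F N \<psi> * N f"
  proof (cases "N f = 0")
    case True
    then have "f = 0" using nfsD(4)[OF nfs f] by simp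
    then show ?thesis using p0 True by simp
  next
    case False
    then have Np: "N f > 0" using nfsD(3)[OF nfs f] by simp
    define f' where "f' = sm (of_real (1 / N f)) f"
    have f'F: "f' \<in> F" unfolding f'_def using subspD(3)[OF Fs f] .
    have Nf': "N f' = 1" unfolding f'_def using snormD(2)[OF nfsD(2)[OF nfs] f] Np by (simp add: norm_divide)
    have "cmod (\<psi> f') \<le> dual_norm F N \<psi>" unfolding dual_norm_def
      by (rule cSUP_upper[OF _ bdd]) (use f'F Nf' in simp)
    moreover have "cmod (\<psi> f') = cmod (\<psi> f) / N f"
      unfolding f'_def using clinD(2)[OF cl f] Np by (simp add: norm_mult norm_divide)
    ultimately show ?thesis using Np by (simp add: field_simps)
  qed
qed

lemma DN_zero:
  assumes nfs: "normed_function_space F N" and z: "\<forall>f\<in>F. \<psi> f = 0"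
  shows "dual_norm F N \<psi> = 0"
proof -
  have "dual_norm F N \<psi> = (SUP f\<in>{f\<in>F. N f \<le> 1}. (0::real))"
    unfolding dual_norm_def by (rule SUP_cong) (use z in auto)
  also have "\<dots> = 0" using nfs_unit_ne[OF nfs] by (intro cSUP_const) blast
  finally show ?thesis .
qed

lemma subsp_dual:
  assumes nfs: "normed_function_space F N"
  shows "subsp (dual_space F N)"
  unfolding subsp_def
proof (intro conjI ballI allI)
  show "0 \<in> dual_space F N" unfolding dual_space_iff clin_def by (auto intro: exI[of _ 0] simp: nfsD(3)[OF nfs])
next
  fix \<phi> \<psi> assume a: "\<phi> \<in> dual_space F N" "\<psi> \<in> dual_space F N"
  obtain C1 where C1: "\<forall>f\<in>F. cmod (\<phi> f) \<le> C1 * N f" and cl1: "clin F \<phi>" using a(1) unfolding dual_space_iff by blast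
  obtain C2 where C2: "\<forall>f\<in>F. cmod (\<psi> f) \<le> C2 * N f" and cl2: "clin F \<psi>" using a(2) unfolding dual_space_iff by blast
  have "clin F (\<phi> + \<psi>)" using cl1 cl2 unfolding clin_def by (simp add: algebra_simps)
  moreover have "\<forall>f\<in>F. cmod ((\<phi> + \<psi>) f) \<le> (C1 + C2) * N f"
  proof
    fix f assume f: "f \<in> F"
    have "cmod ((\<phi> + \<psi>) f) \<le> cmod (\<phi> f) + cmod (\<psi> f)" by (simp add: norm_triangle_ineq)
    also have "\<dots> \<le> (C1 + C2) * N f" using C1 C2 f by (simp add: distrib_right add_mono)
    finally show "cmod ((\<phi> + \<psi>) f) \<le> (C1 + C2) * N f" .
  qed
  ultimately show "\<phi> + \<psi> \<in> dual_space F N" unfolding dual_space_iff by blast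
next
  fix c \<phi> assume a: "\<phi> \<in> dual_space F N"
  obtain C1 where C1: "\<forall>f\<in>F. cmod (\<phi> f) \<le> C1 * N f" and cl1: "clin F \<phi>" using a(1) unfolding dual_space_iff by blast
  have "clin F (sm c \<phi>)" using cl1 unfolding clin_def by (simp add: algebra_simps)
  moreover have "\<forall>f\<in>F. cmod (sm c \<phi> f) \<le> (cmod c * C1) * N f"
  proof
    fix f assume f: "f \<in> F"
    have "cmod (sm c \<phi> f) = cmod c * cmod (\<phi> f)" by (simp add: norm_mult)
    also have "\<dots> \<le> cmod c * (C1 * N f)" using C1 f by (intro mult_left_mono) auto
    finally show "cmod (sm c \<phi> f) \<le> (cmod c * C1) * N f" by simp
  qed
  ultimately show "sm c \<phi> \<in> dual_space F N" unfolding dual_space_iff by blast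
qed

lemma snorm_dual:
  assumes nfs: "normed_function_space F N"
  shows "snorm (dual_space F N) (dual_norm F N)"
proof -
  have Ds: "subsp (dual_space F N)" by (rule subsp_dual[OF nfs])
  have smle: "dual_norm F N (sm c \<phi>) \<le> cmod c * dual_norm F N \<phi>" if a: "\<phi> \<in> dual_space F N" for c \<phi>
  proof (rule DN_least[OF nfs])
    show "0 \<le> cmod c * dual_norm F N \<phi>" using DN_facts(3)[OF nfs a] by simp
    show "\<forall>f\<in>F. cmod (sm c \<phi> f) \<le> cmod c * dual_norm F N \<phi> * N f"
    proof
      fix f assume f: "f \<in> F"
      have "cmod (sm c \<phi> f) = cmod c * cmod (\<phi> f)" by (simp add: norm_mult)
      also have "\<dots> \<le> cmod c * (dual_norm F N \<phi> * N f)" using DN_facts(2)[OF nfs a f] by (intro mult_left_mono) auto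
      finally show "cmod (sm c \<phi> f) \<le> cmod c * dual_norm F N \<phi> * N f" by simp
    qed
  qed
  show ?thesis
    unfolding snorm_def
  proof (intro conjI ballI allI)
    fix \<phi> \<psi> assume a: "\<phi> \<in> dual_space F N" "\<psi> \<in> dual_space F N"
    show "dual_norm F N (\<phi> + \<psi>) \<le> dual_norm F N \<phi> + dual_norm F N \<psi>"
    proof (rule DN_least[OF nfs])
      show "0 \<le> dual_norm F N \<phi> + dual_norm F N \<psi>" using DN_facts(3)[OF nfs a(1)] DN_facts(3)[OF nfs a(2)] by simp
      show "\<forall>f\<in>F. cmod ((\<phi> + \<psi>) f) \<le> (dual_norm F N \<phi> + dual_norm F N \<psi>) * N f"
      proof
        fix f assume f: "f \<in> F"
        have "cmod ((\<phi> + \<psi>) f) \<le> cmod (\<phi> f) + cmod (\<psi> f)" by (simp add: norm_triangle_ineq)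
        also have "\<dots> \<le> (dual_norm F N \<phi> + dual_norm F N \<psi>) * N f"
          using DN_facts(2)[OF nfs a(1) f] DN_facts(2)[OF nfs a(2) f] by (simp add: distrib_right add_mono)
        finally show "cmod ((\<phi> + \<psi>) f) \<le> (dual_norm F N \<phi> + dual_norm F N \<psi>) * N f" .
      qed
    qed
  next
    fix c \<phi> assume a: "\<phi> \<in> dual_space F N"
    show "dual_norm F N (sm c \<phi>) = cmod c * dual_norm F N \<phi>"
    proof (cases "c = 0")
      case True
      have "dual_norm F N (sm c \<phi>) = 0" using True by (intro DN_zero[OF nfs]) simp
      then show ?thesis using True by simp
    next
      case False
      have sc: "sm c \<phi> \<in> dual_space F N" using subspD(3)[OF Ds a] .
      have "dual_norm F N \<phi> = dual_norm F N (sm (1/c) (sm c \<phi>))" using False by (simp add: sm_sm)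
      also have "\<dots> \<le> cmod (1/c) * dual_norm F N (sm c \<phi>)" using smle[OF sc] .
      finally have "cmod c * dual_norm F N \<phi> \<le> dual_norm F N (sm c \<phi>)" using False
        by (simp add: field_simps norm_divide)
      then show ?thesis using smle[OF a, of c] by simp
    qed
  qed
qed

lemma closure_approx:
  fixes g :: "'x \<Rightarrow> complex"
  assumes g: "g \<in> closure A" and S: "finite S" and e: "e > 0"
  shows "\<exists>f\<in>A. \<forall>x\<in>S. cmod (f x - g x) < e"
proof -
  define U where "U = {f::'x\<Rightarrow>complex. \<forall>i\<in>S. f (id i) \<in> ball (g i) e}"
  have oU: "open U" unfolding U_def by (rule product_topology_basis') (use S in auto)
  have gU: "g \<in> U" unfolding U_def using e by simp
  have "A \<inter> U \<noteq> {}" using g oU gU unfolding closure_iff_nhds_not_empty by blast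
  then obtain f where "f \<in> A" "f \<in> U" by blast
  then show ?thesis unfolding U_def by (auto simp: dist_norm norm_minus_commute)
qed

lemma closure_exact:
  fixes g :: "'x \<Rightarrow> complex"
  assumes h: "\<And>S. finite S \<Longrightarrow> \<exists>f\<in>A. \<forall>x\<in>S. f x = g x"
  shows "g \<in> closure A"
  unfolding closure_iff_nhds_not_empty
proof (intro allI impI)
  fix A' T assume T: "T \<subseteq> A'" "open T" "g \<in> T"
  have "openin (product_topology (\<lambda>i. euclidean) UNIV) T" using T(2) unfolding open_fun_def .
  from product_topology_open_contains_basis[OF this T(3)] obtain X where
    X: "g \<in> Pi\<^sub>E UNIV X" "\<And>i. openin euclidean (X i)" "finite {i. X i \<noteq> topspace euclidean}" "Pi\<^sub>E UNIV X \<subseteq> T"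
    by blast
  define S where "S = {i. X i \<noteq> UNIV}"
  have "finite S" using X(3) unfolding S_def by simp
  then obtain f where f: "f \<in> A" "\<forall>x\<in>S. f x = g x" using h by blast
  have "f \<in> Pi\<^sub>E UNIV X"
  proof -
    have "f i \<in> X i" for i
    proof (cases "i \<in> S")
      case True then show ?thesis using f(2) X(1) by (auto simp: PiE_iff)
    next
      case False then show ?thesis unfolding S_def by simp
    qed
    then show ?thesis by (simp add: PiE_iff)
  qed
  then have "f \<in> A'" using X(4) T(1) by blast
  then show "A \<inter> A' \<noteq> {}" using f(1) by blast
qed

lemma dist_snorm:
  assumes V: "subsp V" and q: "snorm V q" and KV: "K \<subseteq> V" and Ks: "subsp K"
  defines "p \<equiv> \<lambda>f. Inf ((\<lambda>k. q (f - k)) ` K)"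
  shows "snorm V p" "\<And>f. f\<in>V \<Longrightarrow> 0 \<le> p f" "\<And>f. f\<in>V \<Longrightarrow> p f \<le> q f" "\<And>k. k\<in>K \<Longrightarrow> p k = 0"
    "\<And>f k. f\<in>V \<Longrightarrow> k\<in>K \<Longrightarrow> p f \<le> q (f - k)"
proof -
  have K0: "0 \<in> K" using subspD(1)[OF Ks] .
  have pdef: "p f = Inf ((\<lambda>k. q (f - k)) ` K)" for f by (simp add: p_def)
  have ne: "(\<lambda>k. q (f - k)) ` K \<noteq> {}" for f using K0 by blast
  have bdd: "bdd_below ((\<lambda>k. q (f - k)) ` K)" if f: "f \<in> V" for f
  proof (rule bdd_belowI2)
    fix k assume "k \<in> K"
    then have "f - k \<in> V" using subspD(5)[OF V f] KV by blast
    then show "0 \<le> q (f - k)" using snorm_nonneg[OF q _ V] by blast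
  qed
  show lower: "p f \<le> q (f - k)" if "f\<in>V" "k\<in>K" for f k
    unfolding pdef[of f] by (rule cInf_lower[OF _ bdd]) (use that in auto)
  show nonneg: "0 \<le> p f" if f: "f\<in>V" for f
    unfolding pdef[of f]
  proof (rule cInf_greatest[OF ne])
    fix y assume "y \<in> (\<lambda>k. q (f - k)) ` K"
    then obtain k where "k \<in> K" "y = q (f - k)" by blast
    then show "0 \<le> y" using bdd_belowI2 snorm_nonneg[OF q _ V] subspD(5)[OF V f] KV by blast
  qed
  show "p f \<le> q f" if f: "f\<in>V" for f using lower[OF f K0] by simp
  show zero: "p k = 0" if k: "k\<in>K" for k
  proof -
    have kV: "k \<in> V" using k KV by blast
    have "q 0 = 0" using snormD(2)[OF q subspD(1)[OF V], of 0] by simp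
    then have "p k \<le> 0" using lower[OF kV k] by simp
    then show ?thesis using nonneg[OF kV] by simp
  qed
  have smle: "p (sm c f) \<le> cmod c * p f" if f: "f \<in> V" for c f
  proof (cases "c = 0")
    case True then show ?thesis using zero[OF K0] by simp
  next
    case False
    have "p (sm c f) / cmod c \<le> p f"
      unfolding pdef[of f]
    proof (rule cInf_greatest[OF ne])
      fix y assume "y \<in> (\<lambda>k. q (f - k)) ` K"
      then obtain k where k: "k \<in> K" "y = q (f - k)" by blast
      have "p (sm c f) \<le> q (sm c f - sm c k)" using lower[OF subspD(3)[OF V f] subspD(3)[OF Ks k(1)]] .
      also have "sm c f - sm c k = sm c (f - k)" by (simp add: fun_eq_iff algebra_simps)
      also have "q (sm c (f - k)) = cmod c * q (f - k)" using snormD(2)[OF q subspD(5)[OF V f]] k KV by blast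
      finally have X: "p (sm c f) \<le> cmod c * q (f - k)" .
      have cpos: "cmod c > 0" using False by simp
      show "p (sm c f) / cmod c \<le> y" using pos_divide_le_eq[OF cpos] X k(2) by (metis mult.commute)
    qed
    then show ?thesis using False by (simp add: field_simps)
  qed
  show "snorm V p"
    unfolding snorm_def
  proof (intro conjI ballI allI)
    fix f g assume f: "f \<in> V" and g: "g \<in> V"
    have "p (f + g) - p f \<le> p g"
      unfolding pdef[of g]
    proof (rule cInf_greatest[OF ne])
      fix y assume "y \<in> (\<lambda>k. q (g - k)) ` K"
      then obtain k2 where k2: "k2 \<in> K" "y = q (g - k2)" by blast
      have "p (f + g) - q (g - k2) \<le> p f"
        unfolding pdef[of f]
      proof (rule cInf_greatest[OF ne])
        fix z assume "z \<in> (\<lambda>k. q (f - k)) ` K"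
        then obtain k1 where k1: "k1 \<in> K" "z = q (f - k1)" by blast
        have "p (f + g) \<le> q ((f + g) - (k1 + k2))"
          using lower[OF subspD(2)[OF V f g] subspD(2)[OF Ks k1(1) k2(1)]] .
        also have "(f + g) - (k1 + k2) = (f - k1) + (g - k2)" by (simp add: algebra_simps)
        also have "q ((f - k1) + (g - k2)) \<le> q (f - k1) + q (g - k2)"
          using snormD(1)[OF q subspD(5)[OF V f] subspD(5)[OF V g]] k1 k2 KV by blast
        finally have X: "p (f + g) \<le> q (f - k1) + q (g - k2)" .
        then show "p (f + g) - q (g - k2) \<le> z" using k1 by linarith
      qed
      then show "p (f + g) - p f \<le> y" using k2 by simp
    qed
    then show "p (f + g) \<le> p f + p g" by simp
  next
    fix c f assume f: "f \<in> V"
    show "p (sm c f) = cmod c * p f"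
    proof (cases "c = 0")
      case True then show ?thesis using zero[OF K0] by simp
    next
      case False
      have "p f = p (sm (1/c) (sm c f))" using False by (simp add: sm_sm)
      also have "\<dots> \<le> cmod (1/c) * p (sm c f)" using smle[OF subspD(3)[OF V f]] .
      finally have "cmod c * p f \<le> p (sm c f)" using False by (simp add: field_simps norm_divide)
      then show ?thesis using smle[OF f, of c] by simp
    qed
  qed
qed

lemma comb_dual:
  assumes nfs: "normed_function_space F N" and S: "finite S"
  shows "comb S a \<in> dual_space F N"
proof -
  obtain Cf where Cf: "\<forall>x. \<forall>f\<in>F. cmod (f x) \<le> Cf x * N f" using nfsD(5)[OF nfs] by blast
  have "\<forall>f\<in>F. cmod (comb S a f) \<le> (\<Sum>y\<in>S. cmod (a y) * Cf y) * N f"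
  proof
    fix f assume f: "f \<in> F"
    have "cmod (comb S a f) \<le> (\<Sum>y\<in>S. cmod (a y * f y))" unfolding comb_def by (rule norm_sum)
    also have "\<dots> \<le> (\<Sum>y\<in>S. cmod (a y) * (Cf y * N f))"
      by (rule sum_mono) (use Cf f in \<open>auto simp: norm_mult intro: mult_left_mono\<close>)
    also have "\<dots> = (\<Sum>y\<in>S. cmod (a y) * Cf y) * N f" by (simp add: sum_distrib_right mult.assoc)
    finally show "cmod (comb S a f) \<le> (\<Sum>y\<in>S. cmod (a y) * Cf y) * N f" .
  qed
  then show ?thesis unfolding dual_space_iff using clin_comb by blast
qed

lemma comb_eval: "comb {x} (\<lambda>_. 1) = (\<lambda>f. f x)" by (simp add: comb_def)

lemma eval_dual: "normed_function_space F N \<Longrightarrow> (\<lambda>f. f x) \<in> dual_space F N"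
  using comb_dual[of F N "{x}" "\<lambda>_. 1"] by (simp add: comb_eval)

lemma comb_empty: "comb {} a = 0" by (simp add: comb_def fun_eq_iff)

lemma comb_insert: "finite S \<Longrightarrow> x \<notin> S \<Longrightarrow> comb (insert x S) a = sm (a x) (\<lambda>f. f x) + comb S a"
  by (simp add: comb_def fun_eq_iff)

lemma Phi_comb:
  assumes nfs: "normed_function_space F N" and cl: "clin (dual_space F N) \<Phi>" and S: "finite S"
  shows "\<Phi> (comb S a) = (\<Sum>y\<in>S. a y * \<Phi> (\<lambda>f. f y))"
  using S
proof (induction S rule: finite_induct)
  case empty
  show ?case by (simp only: comb_empty sum.empty clin_zero[OF cl subsp_dual[OF nfs]])
next
  case (insert x S)
  have D: "subsp (dual_space F N)" using subsp_dual[OF nfs] .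
  have e: "(\<lambda>f. f x) \<in> dual_space F N" using eval_dual[OF nfs] .
  have "\<Phi> (comb (insert x S) a) = \<Phi> (sm (a x) (\<lambda>f. f x) + comb S a)" using comb_insert[OF insert(1,2)] by simp
  also have "\<dots> = \<Phi> (sm (a x) (\<lambda>f. f x)) + \<Phi> (comb S a)"
    using clinD(1)[OF cl subspD(3)[OF D e] comb_dual[OF nfs insert(1)]] .
  also have "\<dots> = a x * \<Phi> (\<lambda>f. f x) + (\<Sum>y\<in>S. a y * \<Phi> (\<lambda>f. f y))"
    using clinD(2)[OF cl e] insert(3) by simp
  finally show ?case using insert(1,2) by simp
qed

lemma comb_ext: "finite T \<Longrightarrow> S \<subseteq> T \<Longrightarrow> comb S a = comb T (\<lambda>y. if y \<in> S then a y else 0)"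
proof -
  assume T: "finite T" and ST: "S \<subseteq> T"
  have *: "(\<Sum>y\<in>T. (if y \<in> S then a y else 0) * f y) = (\<Sum>y\<in>S. a y * f y)" for f
  proof -
    have "(\<Sum>y\<in>T. (if y \<in> S then a y else 0) * f y) = (\<Sum>y\<in>T. if y \<in> S then a y * f y else 0)"
      by (rule sum.cong) auto
    also have "\<dots> = (\<Sum>y\<in>T \<inter> S. a y * f y)" by (rule sum.inter_restrict[OF T, symmetric])
    also have "T \<inter> S = S" using ST by blast
    finally show ?thesis .
  qed
  show ?thesis unfolding comb_def by (rule ext) (rule *[symmetric])
qed

lemma comb_add: "finite S \<Longrightarrow> finite T \<Longrightarrow>
  comb S a + comb T b = comb (S \<union> T) (\<lambda>y. (if y \<in> S then a y else 0) + (if y \<in> T then b y else 0))"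
proof -
  assume S: "finite S" and T: "finite T"
  have "comb S a = comb (S \<union> T) (\<lambda>y. if y \<in> S then a y else 0)" using S T by (intro comb_ext) auto
  moreover have "comb T b = comb (S \<union> T) (\<lambda>y. if y \<in> T then b y else 0)" using S T by (intro comb_ext) auto
  ultimately show ?thesis by (simp add: comb_def fun_eq_iff sum.distrib distrib_right)
qed

lemma comb_sm: "sm c (comb S a) = comb S (\<lambda>y. c * a y)"
  unfolding comb_def sm_def by (rule ext) (simp add: sum_distrib_left mult.assoc)

definition KE :: "(('x \<Rightarrow> complex) \<Rightarrow> complex) set" where
  "KE = {comb S a | S a. finite S}"

lemma KE_I: "finite S \<Longrightarrow> comb S a \<in> KE" unfolding KE_def by blast

lemma KE_E: "\<psi> \<in> KE \<Longrightarrow> (\<And>S a. finite S \<Longrightarrow> \<psi> = comb S a \<Longrightarrow> P) \<Longrightarrow> P" unfolding KE_def by blast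

lemma subsp_KE: "subsp KE"
  unfolding subsp_def
proof (intro conjI ballI allI)
  show "0 \<in> KE" by (metis KE_I comb_empty finite.emptyI)
next
  fix f g :: "('a \<Rightarrow> complex) \<Rightarrow> complex" assume "f \<in> KE" "g \<in> KE"
  then obtain S a T b where fg: "f = comb S a" "finite S" "g = comb T b" "finite T" by (metis KE_E)
  define c where "c = (\<lambda>y. (if y \<in> S then a y else 0) + (if y \<in> T then b y else 0))"
  have eq: "f + g = comb (S \<union> T) c" unfolding c_def fg(1,3) by (rule comb_add[OF fg(2,4)])
  show "f + g \<in> KE" unfolding eq by (rule KE_I) (use fg in simp)
next
  fix c and f :: "('a \<Rightarrow> complex) \<Rightarrow> complex" assume "f \<in> KE"
  then obtain S a where fS: "f = comb S a" "finite S" by (metis KE_E)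
  have eq: "sm c f = comb S (\<lambda>y. c * a y)" unfolding fS(1) by (rule comb_sm)
  show "sm c f \<in> KE" unfolding eq by (rule KE_I[OF fS(2)])
qed

lemma KE_dual: "normed_function_space F N \<Longrightarrow> KE \<subseteq> dual_space F N"
  using comb_dual by (metis KE_E subsetI)

lemma kernel_comb:
  assumes Fs: "subsp F" and fin: "finite S"
  shows "clin F \<psi> \<Longrightarrow> (\<forall>f\<in>F. (\<forall>x\<in>S. f x = 0) \<longrightarrow> \<psi> f = 0) \<Longrightarrow> \<exists>a. \<forall>f\<in>F. \<psi> f = comb S a f"
  using fin
proof (induction S arbitrary: \<psi> rule: finite_induct)
  case empty
  then show ?case by (simp add: comb_def)
next
  case (insert x S)
  note cl = insert.prems(1) and van = insert.prems(2)
  show ?case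
  proof (cases "\<exists>h\<in>F. (\<forall>y\<in>S. h y = 0) \<and> h x = 1")
    case True
    then obtain h where hF: "h \<in> F" and hS: "\<forall>y\<in>S. h y = 0" and hx: "h x = 1" by blast
    define \<psi>' where "\<psi>' f = \<psi> (f - sm (f x) h)" for f
    have inF: "f - sm (f x) h \<in> F" if "f \<in> F" for f using subspD(5)[OF Fs that subspD(3)[OF Fs hF]] .
    have cl': "clin F \<psi>'"
      unfolding clin_def
    proof (intro conjI ballI allI)
      fix f g assume f: "f \<in> F" and g: "g \<in> F"
      have eq: "(f + g) - sm ((f + g) x) h = (f - sm (f x) h) + (g - sm (g x) h)" by (simp add: fun_eq_iff algebra_simps)
      show "\<psi>' (f + g) = \<psi>' f + \<psi>' g" unfolding \<psi>'_def eq by (rule clinD(1)[OF cl inF[OF f] inF[OF g]])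
    next
      fix c f assume f: "f \<in> F"
      have eq: "sm c f - sm (sm c f x) h = sm c (f - sm (f x) h)" by (simp add: fun_eq_iff algebra_simps)
      show "\<psi>' (sm c f) = c * \<psi>' f" unfolding \<psi>'_def eq by (rule clinD(2)[OF cl inF[OF f]])
    qed
    have van': "\<forall>f\<in>F. (\<forall>y\<in>S. f y = 0) \<longrightarrow> \<psi>' f = 0"
    proof (intro ballI impI)
      fix f assume f: "f \<in> F" and fS: "\<forall>y\<in>S. f y = 0"
      have "\<forall>y\<in>insert x S. (f - sm (f x) h) y = 0" using fS hS hx by simp
      then show "\<psi>' f = 0" unfolding \<psi>'_def using van inF[OF f] by blast
    qed
    obtain a where a: "\<forall>f\<in>F. \<psi>' f = comb S a f" using insert.IH[OF cl' van'] by blast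
    define a' where "a' = a(x := \<psi> h)"
    have "\<psi> f = comb (insert x S) a' f" if f: "f \<in> F" for f
    proof -
      have e1: "(f - sm (f x) h) + sm (f x) h = f" by (rule diff_add_cancel)
      have "\<psi> ((f - sm (f x) h) + sm (f x) h) = \<psi> (f - sm (f x) h) + \<psi> (sm (f x) h)"
        by (rule clinD(1)[OF cl inF[OF f] subspD(3)[OF Fs hF]])
      also have "\<psi> (sm (f x) h) = f x * \<psi> h" by (rule clinD(2)[OF cl hF])
      finally have "\<psi> f = \<psi>' f + f x * \<psi> h" unfolding e1 \<psi>'_def .
      also have "\<dots> = comb S a f + f x * \<psi> h" using a f by simp
      also have "comb S a f = comb S a' f" unfolding comb_def a'_def using insert(2)
        by (intro sum.cong) auto
      finally show ?thesis using insert(1,2) by (simp add: comb_insert a'_def)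
    qed
    then show ?thesis by blast
  next
    case False
    have hx0: "h x = 0" if "h \<in> F" "\<forall>y\<in>S. h y = 0" for h
    proof (rule ccontr)
      assume ne: "h x \<noteq> 0"
      have "sm (1 / h x) h \<in> F" using subspD(3)[OF Fs that(1)] .
      moreover have "\<forall>y\<in>S. sm (1 / h x) h y = 0" using that(2) by simp
      moreover have "sm (1 / h x) h x = 1" using ne by simp
      ultimately show False using False by blast
    qed
    have van': "\<forall>f\<in>F. (\<forall>y\<in>S. f y = 0) \<longrightarrow> \<psi> f = 0"
      using van hx0 by auto
    obtain a where a: "\<forall>f\<in>F. \<psi> f = comb S a f" using insert.IH[OF cl van'] by blast
    have "\<psi> f = comb (insert x S) (a(x := 0)) f" if f: "f \<in> F" for f
    proof -
      have "comb S a f = comb S (a(x := 0)) f" unfolding comb_def using insert(2)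
        by (intro sum.cong) auto
      then show ?thesis using a f insert(1,2) by (simp add: comb_insert)
    qed
    then show ?thesis by blast
  qed
qed

lemma exists_interp:
  assumes Fs: "subsp F" and fin: "finite S"
    and P: "\<And>T b. finite T \<Longrightarrow> (\<forall>f\<in>F. comb T b f = 0) \<Longrightarrow> comb T b g = 0"
  shows "\<exists>f0\<in>F. \<forall>x\<in>S. f0 x = g x"
  using fin
proof (induction S rule: finite_induct)
  case empty
  then show ?case using subspD(1)[OF Fs] by blast
next
  case (insert x S)
  then obtain f0 where f0F: "f0 \<in> F" and f0S: "\<forall>y\<in>S. f0 y = g y" by blast
  show ?case
  proof (cases "\<exists>h\<in>F. (\<forall>y\<in>S. h y = 0) \<and> h x = 1")
    case True
    then obtain h where hF: "h \<in> F" and hS: "\<forall>y\<in>S. h y = 0" and hx: "h x = 1" by blast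
    define f where "f = f0 + sm (g x - f0 x) h"
    have "f \<in> F" unfolding f_def using subspD(2)[OF Fs f0F subspD(3)[OF Fs hF]] .
    moreover have "\<forall>y\<in>insert x S. f y = g y" unfolding f_def using f0S hS hx by simp
    ultimately show ?thesis by blast
  next
    case False
    have hx0: "h x = 0" if "h \<in> F" "\<forall>y\<in>S. h y = 0" for h
    proof (rule ccontr)
      assume ne: "h x \<noteq> 0"
      have "sm (1 / h x) h \<in> F" using subspD(3)[OF Fs that(1)] .
      moreover have "\<forall>y\<in>S. sm (1 / h x) h y = 0" using that(2) by simp
      moreover have "sm (1 / h x) h x = 1" using ne by simp
      ultimately show False using False by blast
    qed
    obtain a where a: "\<forall>f\<in>F. f x = comb S a f"
      using kernel_comb[OF Fs insert(1) clin_eval, of x] hx0 by blast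
    define b where "b = (a(x := -1))"
    have bS: "comb S b = comb S a" unfolding comb_def b_def using insert(2) by (intro ext sum.cong) auto
    have "comb (insert x S) b f = comb S a f - f x" for f
      using insert(1,2) bS by (simp add: comb_insert b_def fun_eq_iff)
    then have "\<forall>f\<in>F. comb (insert x S) b f = 0" using a by simp
    then have "comb (insert x S) b g = 0" using P insert(1) by blast
    then have gx: "g x = comb S a g" using insert(1,2) bS by (simp add: comb_insert b_def)
    also have "\<dots> = comb S a f0" unfolding comb_def using f0S by simp
    also have "\<dots> = f0 x" using a f0F by simp
    finally show ?thesis using f0F f0S by auto
  qed
qed

lemma ecs_iff:
  "\<phi> \<in> eval_closed_span F N \<longleftrightarrow> \<phi> \<in> dual_space F N \<and>
     (\<forall>\<epsilon>>0. \<exists>S a. finite S \<and> dual_norm F N (\<phi> - comb S a) < \<epsilon>)"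
proof -
  have mc: "(\<lambda>f. \<phi> f - (\<Sum>x\<in>S. a x * f x)) = \<phi> - comb S a" for S a by (simp add: fun_eq_iff comb_def)
  show ?thesis unfolding eval_closed_span_def mem_Collect_eq mc ..
qed

lemma sm_span_subsp: "subsp V \<Longrightarrow> \<phi> \<in> V \<Longrightarrow> subsp {sm c \<phi> | c. True} \<and> {sm c \<phi> | c. True} \<subseteq> V"
proof
  assume V: "subsp V" and p: "\<phi> \<in> V"
  show "{sm c \<phi> | c. True} \<subseteq> V" using subspD(3)[OF V p] by blast
  show "subsp {sm c \<phi> | c. True}" unfolding subsp_def
  proof (intro conjI ballI allI)
    show "0 \<in> {sm c \<phi> | c. True}" by (rule CollectI, rule exI[of _ 0]) simp
  next
    fix f g assume "f \<in> {sm c \<phi> | c. True}" "g \<in> {sm c \<phi> | c. True}"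
    then obtain c d where "f = sm c \<phi>" "g = sm d \<phi>" by blast
    then have "f + g = sm (c + d) \<phi>" by (simp add: sm_add2)
    then show "f + g \<in> {sm c \<phi> | c. True}" by blast
  next
    fix e f assume "f \<in> {sm c \<phi> | c. True}"
    then obtain c where "f = sm c \<phi>" by blast
    then have "sm e f = sm (e * c) \<phi>" by (simp add: sm_sm)
    then show "sm e f \<in> {sm c \<phi> | c. True}" by blast
  qed
qed

lemma norming_HB:
  assumes V: "subsp V" and p: "snorm V p" and f0: "f0 \<in> V" and x0: "f0 x0 \<noteq> 0"
  shows "\<exists>\<psi>. clin V \<psi> \<and> \<psi> f0 = of_real (p f0) \<and> (\<forall>h\<in>V. cmod (\<psi> h) \<le> p h)"
proof -
  define M where "M = {sm c f0 | c. True}"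
  have MV: "M \<subseteq> V" and Ms: "subsp M" using sm_span_subsp[OF V f0] unfolding M_def by auto
  define L where "L h = h x0 / f0 x0 * of_real (p f0)" for h
  have clL: "clin M L" unfolding clin_def L_def by (simp add: algebra_simps add_divide_distrib)
  have pf0: "0 \<le> p f0" using snorm_nonneg[OF p f0 V] .
  have bd: "\<forall>h\<in>M. cmod (L h) \<le> p h"
  proof
    fix h assume "h \<in> M"
    then obtain c where c: "h = sm c f0" unfolding M_def by blast
    have "L h = c * of_real (p f0)" unfolding c L_def using x0 by simp
    then have "cmod (L h) = cmod c * p f0" using pf0 by (simp add: norm_mult)
    also have "\<dots> = p h" unfolding c using snormD(2)[OF p f0] by simp
    finally show "cmod (L h) \<le> p h" by simp
  qed
  obtain \<psi> where \<psi>: "clin V \<psi>" "\<forall>h\<in>M. \<psi> h = L h" "\<forall>h\<in>V. cmod (\<psi> h) \<le> p h"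
    using complex_HB[OF V p MV Ms clL bd] by blast
  have "f0 \<in> M" unfolding M_def by (rule CollectI, rule exI[of _ 1]) simp
  then have "\<psi> f0 = L f0" using \<psi>(2) by blast
  also have "\<dots> = of_real (p f0)" unfolding L_def using x0 by simp
  finally show ?thesis using \<psi> by blast
qed

lemma fwd_span:
  assumes nfs: "normed_function_space F N"
    and refl: "\<forall>\<Phi>\<in>bidual_space F N. \<exists>f\<in>F. \<forall>\<phi>\<in>dual_space F N. \<Phi> \<phi> = \<phi> f"
  shows "eval_closed_span F N = dual_space F N"
proof
  show "eval_closed_span F N \<subseteq> dual_space F N" using ecs_iff by blast
next
  have Ds: "subsp (dual_space F N)" by (rule subsp_dual[OF nfs])
  have Dn: "snorm (dual_space F N) (dual_norm F N)" by (rule snorm_dual[OF nfs])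
  show "dual_space F N \<subseteq> eval_closed_span F N"
  proof
    fix \<phi>0 assume p0D: "\<phi>0 \<in> dual_space F N"
    show "\<phi>0 \<in> eval_closed_span F N"
    proof (rule ccontr)
      assume "\<phi>0 \<notin> eval_closed_span F N"
      then obtain \<epsilon> where \<epsilon>: "\<epsilon> > 0" and far: "\<And>S a. finite S \<Longrightarrow> \<epsilon> \<le> dual_norm F N (\<phi>0 - comb S a)"
        using p0D unfolding ecs_iff by (meson not_less)
      define p where "p = (\<lambda>\<psi>. Inf ((\<lambda>k. dual_norm F N (\<psi> - k)) ` KE))"
      note ds = dist_snorm[OF Ds Dn KE_dual[OF nfs] subsp_KE]
      have pn: "snorm (dual_space F N) p" unfolding p_def by (rule ds(1))
      have ple: "p \<psi> \<le> dual_norm F N \<psi>" if "\<psi> \<in> dual_space F N" for \<psi>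
        unfolding p_def using ds(3)[OF that] by simp
      have pK: "p k = 0" if "k \<in> KE" for k unfolding p_def using ds(4)[OF that] by simp
      have pge: "\<epsilon> \<le> p \<phi>0"
        unfolding p_def
      proof (rule cInf_greatest)
        show "(\<lambda>k. dual_norm F N (\<phi>0 - k)) ` KE \<noteq> {}" using subspD(1)[OF subsp_KE] by blast
      next
        fix y assume "y \<in> (\<lambda>k. dual_norm F N (\<phi>0 - k)) ` KE"
        then obtain k where k: "k \<in> KE" "y = dual_norm F N (\<phi>0 - k)" by blast
        then obtain S a where "finite S" "k = comb S a" by (metis KE_E)
        then show "\<epsilon> \<le> y" using far k(2) by simp
      qed
      obtain f1 where f1: "f1 \<in> F" "\<phi>0 f1 \<noteq> 0"
      proof (rule ccontr)
        assume "\<not> thesis"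
        then have "\<forall>f\<in>F. \<phi>0 f = 0" using that by blast
        then have "dual_norm F N \<phi>0 = 0" by (rule DN_zero[OF nfs])
        moreover have "\<epsilon> \<le> dual_norm F N (\<phi>0 - comb {} (\<lambda>_. 0))" by (rule far) simp
        ultimately show False using \<epsilon> by (simp add: comb_empty)
      qed
      have cl0: "clin F \<phi>0" using p0D unfolding dual_space_iff by blast
      define M where "M = {sm c \<phi>0 | c. True}"
      have MV: "M \<subseteq> dual_space F N" and Ms: "subsp M" using sm_span_subsp[OF Ds p0D] unfolding M_def by auto
      define L where "L \<psi> = \<psi> f1 / \<phi>0 f1 * of_real (p \<phi>0)" for \<psi> :: "('a \<Rightarrow> complex) \<Rightarrow> complex"
      have clL: "clin M L" unfolding clin_def L_def by (simp add: algebra_simps add_divide_distrib)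
      have pp0: "0 \<le> p \<phi>0" using pge \<epsilon> by simp
      have bd: "\<forall>h\<in>M. cmod (L h) \<le> p h"
      proof
        fix h assume "h \<in> M"
        then obtain c where c: "h = sm c \<phi>0" unfolding M_def by blast
        have "L h = c * of_real (p \<phi>0)" unfolding c L_def using f1(2) by simp
        then have "cmod (L h) = cmod c * p \<phi>0" using pp0 by (simp add: norm_mult)
        also have "\<dots> = p h" unfolding c using snormD(2)[OF pn p0D] by simp
        finally show "cmod (L h) \<le> p h" by simp
      qed
      obtain \<Phi> where \<Phi>: "clin (dual_space F N) \<Phi>" "\<forall>h\<in>M. \<Phi> h = L h" "\<forall>h\<in>dual_space F N. cmod (\<Phi> h) \<le> p h"
        using complex_HB[OF Ds pn MV Ms clL bd] by blast
      have "\<Phi> \<in> bidual_space F N" unfolding bidual_space_iff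
      proof (intro conjI exI[of _ 1] ballI)
        show "clin (dual_space F N) \<Phi>" by (rule \<Phi>(1))
        fix \<psi> assume "\<psi> \<in> dual_space F N"
        then show "cmod (\<Phi> \<psi>) \<le> 1 * dual_norm F N \<psi>" using \<Phi>(3) ple[of \<psi>] by force
      qed
      then obtain f where fF: "f \<in> F" and fr: "\<forall>\<phi>\<in>dual_space F N. \<Phi> \<phi> = \<phi> f" using refl by blast
      have "f x = 0" for x
      proof -
        have e: "(\<lambda>g. g x) \<in> dual_space F N" by (rule eval_dual[OF nfs])
        have "(\<lambda>g. g x) \<in> KE" using KE_I[of "{x}" "\<lambda>_. 1"] by (simp add: comb_eval)
        then have "p (\<lambda>g. g x) = 0" by (rule pK)
        then have "\<Phi> (\<lambda>g. g x) = 0" using \<Phi>(3) e by force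
        then show ?thesis using fr e by simp
      qed
      then have f0: "f = 0" by (simp add: fun_eq_iff)
      have "\<phi>0 \<in> M" unfolding M_def by (rule CollectI, rule exI[of _ 1]) simp
      then have "\<Phi> \<phi>0 = L \<phi>0" using \<Phi>(2) by blast
      also have "\<dots> = of_real (p \<phi>0)" unfolding L_def using f1(2) by simp
      finally have "\<Phi> \<phi>0 = of_real (p \<phi>0)" .
      moreover have "\<Phi> \<phi>0 = \<phi>0 0" using fr p0D f0 by simp
      moreover have "\<phi>0 0 = 0" by (rule clin_zero[OF cl0 nfsD(1)[OF nfs]])
      ultimately show False using pge \<epsilon> by simp
    qed
  qed
qed

lemma comb_sub_bound:
  assumes S: "finite S" and d: "\<forall>y\<in>S. cmod (f y - g y) < \<delta>" and dp: "0 < \<delta>"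
  shows "cmod (comb S a g) \<le> cmod (comb S a f) + \<delta> * (\<Sum>y\<in>S. cmod (a y))"
proof -
  have "comb S a g = comb S a f + (\<Sum>y\<in>S. a y * (g y - f y))"
    unfolding comb_def by (simp add: sum.distrib[symmetric] algebra_simps)
  then have "cmod (comb S a g) \<le> cmod (comb S a f) + cmod (\<Sum>y\<in>S. a y * (g y - f y))"
    by (simp add: norm_triangle_ineq)
  also have "cmod (\<Sum>y\<in>S. a y * (g y - f y)) \<le> (\<Sum>y\<in>S. cmod (a y) * \<delta>)"
  proof -
    have "cmod (\<Sum>y\<in>S. a y * (g y - f y)) \<le> (\<Sum>y\<in>S. cmod (a y * (g y - f y)))" by (rule norm_sum)
    also have "\<dots> \<le> (\<Sum>y\<in>S. cmod (a y) * \<delta>)"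
    proof (rule sum_mono)
      fix y assume y: "y \<in> S"
      have "cmod (g y - f y) \<le> \<delta>" using d y by (simp add: norm_minus_commute less_imp_le)
      then show "cmod (a y * (g y - f y)) \<le> cmod (a y) * \<delta>" by (simp add: norm_mult mult_left_mono)
    qed
    finally show ?thesis .
  qed
  also have "(\<Sum>y\<in>S. cmod (a y) * \<delta>) = \<delta> * (\<Sum>y\<in>S. cmod (a y))"
    by (simp add: sum_distrib_left mult.commute)
  finally show ?thesis by simp
qed

lemma fwd_regular:
  assumes nfs: "normed_function_space F N"
    and refl: "\<forall>\<Phi>\<in>bidual_space F N. \<exists>f\<in>F. \<forall>\<phi>\<in>dual_space F N. \<Phi> \<phi> = \<phi> f"
  shows "closed {f\<in>F. N f \<le> 1}"
proof -
  have Fs: "subsp F" and Fn: "snorm F N" using nfsD[OF nfs] by auto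
  have Ds: "subsp (dual_space F N)" by (rule subsp_dual[OF nfs])
  have Dn: "snorm (dual_space F N) (dual_norm F N)" by (rule snorm_dual[OF nfs])
  have "closure {f\<in>F. N f \<le> 1} \<subseteq> {f\<in>F. N f \<le> 1}"
  proof
    fix g assume g: "g \<in> closure {f\<in>F. N f \<le> 1}"
    have cg: "cmod (comb S a g) \<le> dual_norm F N (comb S a)" if S: "finite S" for S a
    proof (rule field_le_epsilon)
      fix e :: real assume e: "0 < e"
      define A where "A = (\<Sum>y\<in>S. cmod (a y)) + 1"
      have A: "A > 0" unfolding A_def by (simp add: sum_nonneg add_nonneg_pos)
      define \<delta> where "\<delta> = e / A"
      have \<delta>: "\<delta> > 0" unfolding \<delta>_def using e A by simp
      obtain f where f: "f \<in> {f\<in>F. N f \<le> 1}" "\<forall>x\<in>S. cmod (f x - g x) < \<delta>"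
        using closure_approx[OF g S \<delta>] by blast
      have cd: "comb S a \<in> dual_space F N" by (rule comb_dual[OF nfs S])
      have "cmod (comb S a g) \<le> cmod (comb S a f) + \<delta> * (\<Sum>y\<in>S. cmod (a y))"
        by (rule comb_sub_bound[OF S f(2) \<delta>])
      also have "cmod (comb S a f) \<le> dual_norm F N (comb S a) * N f"
        using DN_facts(2)[OF nfs cd] f(1) by blast
      also have "\<dots> \<le> dual_norm F N (comb S a) * 1"
        using f(1) DN_facts(3)[OF nfs cd] by (intro mult_left_mono) auto
      also have "\<delta> * (\<Sum>y\<in>S. cmod (a y)) \<le> \<delta> * A" unfolding A_def using \<delta> by simp
      also have "\<delta> * A = e" unfolding \<delta>_def using A by simp
      finally show "cmod (comb S a g) \<le> dual_norm F N (comb S a) + e" by simp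
    qed
    define L where "L \<psi> = \<psi> g" for \<psi> :: "('a \<Rightarrow> complex) \<Rightarrow> complex"
    have clL: "clin KE L" unfolding clin_def L_def by simp
    have bd: "\<forall>h\<in>KE. cmod (L h) \<le> dual_norm F N h"
    proof
      fix h :: "('a \<Rightarrow> complex) \<Rightarrow> complex" assume "h \<in> KE"
      then obtain S a where "finite S" "h = comb S a" by (metis KE_E)
      then show "cmod (L h) \<le> dual_norm F N h" unfolding L_def using cg by simp
    qed
    obtain \<Phi> where \<Phi>: "clin (dual_space F N) \<Phi>" "\<forall>h\<in>KE. \<Phi> h = L h"
      "\<forall>h\<in>dual_space F N. cmod (\<Phi> h) \<le> dual_norm F N h"
      using complex_HB[OF Ds Dn KE_dual[OF nfs] subsp_KE clL bd] by blast
    have "\<Phi> \<in> bidual_space F N" unfolding bidual_space_iff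
      using \<Phi>(1,3) by (intro conjI exI[of _ 1]) auto
    then obtain f0 where f0F: "f0 \<in> F" and fr: "\<forall>\<phi>\<in>dual_space F N. \<Phi> \<phi> = \<phi> f0" using refl by blast
    have "f0 x = g x" for x
    proof -
      have e: "(\<lambda>h. h x) \<in> dual_space F N" by (rule eval_dual[OF nfs])
      have "(\<lambda>h. h x) \<in> KE" using KE_I[of "{x}" "\<lambda>_. 1"] by (simp add: comb_eval)
      then have "\<Phi> (\<lambda>h. h x) = g x" using \<Phi>(2) unfolding L_def by simp
      then show ?thesis using fr e by simp
    qed
    then have gf: "g = f0" by (simp add: fun_eq_iff)
    then have gF: "g \<in> F" using f0F by simp
    have "N g \<le> 1"
    proof (cases "g = 0")
      case True then show ?thesis using nfs_zero[OF nfs] by simp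
    next
      case False
      then obtain x0 where x0: "g x0 \<noteq> 0" by (auto simp: fun_eq_iff)
      obtain \<psi> where \<psi>: "clin F \<psi>" "\<psi> g = of_real (N g)" "\<forall>h\<in>F. cmod (\<psi> h) \<le> N h"
        using norming_HB[OF Fs Fn gF x0] by blast
      have \<psi>D: "\<psi> \<in> dual_space F N" unfolding dual_space_iff using \<psi>(1,3) by (intro conjI exI[of _ 1]) auto
      have "dual_norm F N \<psi> \<le> 1" by (rule DN_least[OF nfs]) (use \<psi>(3) in auto)
      moreover have "N g = cmod (\<Phi> \<psi>)" using fr \<psi>D \<psi>(2) gf nfsD(3)[OF nfs gF] by simp
      moreover have "cmod (\<Phi> \<psi>) \<le> dual_norm F N \<psi>" using \<Phi>(3) \<psi>D by blast
      ultimately show ?thesis by simp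
    qed
    then show "g \<in> {f\<in>F. N f \<le> 1}" using gF by simp
  qed
  then show ?thesis using closure_subset_eq by blast
qed

lemma bwd:
  assumes nfs: "normed_function_space F N"
    and reg: "closed {f\<in>F. N f \<le> 1}"
    and ecs: "eval_closed_span F N = dual_space F N"
    and PhiB: "\<Phi> \<in> bidual_space F N"
  shows "\<exists>f\<in>F. \<forall>\<phi>\<in>dual_space F N. \<Phi> \<phi> = \<phi> f"
proof -
  have Fs: "subsp F" and Fn: "snorm F N" using nfsD[OF nfs] by auto
  have Ds: "subsp (dual_space F N)" by (rule subsp_dual[OF nfs])
  obtain C0 where clP: "clin (dual_space F N) \<Phi>" and C0: "\<forall>\<phi>\<in>dual_space F N. cmod (\<Phi> \<phi>) \<le> C0 * dual_norm F N \<phi>"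
    using PhiB unfolding bidual_space_iff by blast
  have C0': "cmod (\<Phi> \<phi>) \<le> \<bar>C0\<bar> * dual_norm F N \<phi>" if "\<phi> \<in> dual_space F N" for \<phi>
  proof -
    have "C0 * dual_norm F N \<phi> \<le> \<bar>C0\<bar> * dual_norm F N \<phi>"
      using DN_facts(3)[OF nfs that] by (intro mult_right_mono) auto
    then show ?thesis using C0 that by force
  qed
  define g where "g x = \<Phi> (\<lambda>f. f x)" for x
  define C where "C = \<bar>C0\<bar> + 1"
  have Cpos: "C > 0" unfolding C_def by simp
  have PhiC: "\<Phi> (comb S a) = comb S a g" if "finite S" for S a
    using Phi_comb[OF nfs clP that] by (simp add: comb_def g_def)
  have P: "comb T b g = 0" if T: "finite T" and z: "\<forall>f\<in>F. comb T b f = 0" for T b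
  proof -
    have "dual_norm F N (comb T b) = 0" by (rule DN_zero[OF nfs z])
    then have "cmod (\<Phi> (comb T b)) \<le> 0" using C0'[OF comb_dual[OF nfs T, of b]] by simp
    then show ?thesis using PhiC[OF T] by simp
  qed
  have step1: "\<exists>f\<in>F. (\<forall>x\<in>S. f x = g x) \<and> N f < C" if S: "finite S" for S
  proof -
    obtain f0 where f0F: "f0 \<in> F" and f0S: "\<forall>x\<in>S. f0 x = g x" using exists_interp[OF Fs S P] by blast
    define K where "K = {f\<in>F. \<forall>x\<in>S. f x = 0}"
    have KF: "K \<subseteq> F" unfolding K_def by blast
    have Ks: "subsp K" unfolding subsp_def K_def using subspD[OF Fs] by simp
    show ?thesis
    proof (cases "f0 \<in> K")
      case True
      then have z: "\<forall>x\<in>S. (0::'a\<Rightarrow>complex) x = g x" using f0S unfolding K_def by auto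
      show ?thesis
        by (rule bexI[of _ 0]) (use z nfs_zero[OF nfs] Cpos in auto)
    next
      case False
      then obtain x0 where x0: "x0 \<in> S" "f0 x0 \<noteq> 0" using f0F unfolding K_def by blast
      define pK where "pK = (\<lambda>f. Inf ((\<lambda>k. N (f - k)) ` K))"
      note ds = dist_snorm[OF Fs Fn KF Ks]
      have pn: "snorm F pK" unfolding pK_def by (rule ds(1))
      have pleN: "pK f \<le> N f" if "f \<in> F" for f unfolding pK_def using ds(3)[OF that] by simp
      have pK0: "pK k = 0" if "k \<in> K" for k unfolding pK_def using ds(4)[OF that] by simp
      obtain \<psi> where \<psi>: "clin F \<psi>" "\<psi> f0 = of_real (pK f0)" "\<forall>h\<in>F. cmod (\<psi> h) \<le> pK h"
        using norming_HB[OF Fs pn f0F x0(2)] by blast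
      have van: "\<forall>f\<in>F. (\<forall>x\<in>S. f x = 0) \<longrightarrow> \<psi> f = 0"
      proof (intro ballI impI)
        fix f assume "f \<in> F" "\<forall>x\<in>S. f x = 0"
        then have "f \<in> K" unfolding K_def by blast
        then show "\<psi> f = 0" using \<psi>(3) pK0 KF by force
      qed
      obtain a where a: "\<forall>f\<in>F. \<psi> f = comb S a f" using kernel_comb[OF Fs S \<psi>(1) van] by blast
      have cD: "comb S a \<in> dual_space F N" by (rule comb_dual[OF nfs S])
      have DN1: "dual_norm F N (comb S a) \<le> 1"
      proof (rule DN_least[OF nfs])
        show "\<forall>f\<in>F. cmod (comb S a f) \<le> 1 * N f" using a \<psi>(3) pleN by force
      qed simp
      have "of_real (pK f0) = comb S a f0" using \<psi>(2) a f0F by simp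
      also have "\<dots> = comb S a g" unfolding comb_def using f0S by simp
      also have "\<dots> = \<Phi> (comb S a)" using PhiC[OF S] by simp
      finally have "pK f0 = cmod (\<Phi> (comb S a))" using ds(2)[OF f0F] unfolding pK_def
        by (metis norm_of_real abs_of_nonneg)
      also have "\<dots> \<le> \<bar>C0\<bar> * dual_norm F N (comb S a)" by (rule C0'[OF cD])
      also have "\<dots> \<le> \<bar>C0\<bar> * 1" using DN1 by (intro mult_left_mono) auto
      finally have "pK f0 < C" unfolding C_def by simp
      then obtain k where k: "k \<in> K" "N (f0 - k) < C"
        unfolding pK_def using cInf_lessD[of "(\<lambda>k. N (f0 - k)) ` K" C] subspD(1)[OF Ks] by blast
      have "f0 - k \<in> F" using subspD(5)[OF Fs f0F] k(1) KF by blast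
      moreover have "\<forall>x\<in>S. (f0 - k) x = g x" using f0S k(1) unfolding K_def by simp
      ultimately show ?thesis using k(2) by blast
    qed
  qed
  define CB where "CB = {f\<in>F. N f \<le> C}"
  have gcl: "g \<in> closure CB"
  proof (rule closure_exact)
    fix S :: "'a set" assume "finite S"
    then obtain f where "f \<in> F" "\<forall>x\<in>S. f x = g x" "N f < C" using step1 by blast
    then show "\<exists>f\<in>CB. \<forall>x\<in>S. f x = g x" unfolding CB_def by force
  qed
  have CBeq: "CB = (\<lambda>f. sm (of_real (1 / C)) f) -` {f\<in>F. N f \<le> 1}"
  proof (intro set_eqI iffI)
    fix f assume "f \<in> CB"
    then have f: "f \<in> F" "N f \<le> C" unfolding CB_def by auto
    have "N (sm (of_real (1 / C)) f) = N f / C" using snormD(2)[OF Fn f(1)] Cpos by (simp add: norm_divide)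
    then show "f \<in> (\<lambda>f. sm (of_real (1 / C)) f) -` {f\<in>F. N f \<le> 1}"
      using f Cpos subspD(3)[OF Fs f(1)] by simp
  next
    fix f assume "f \<in> (\<lambda>f. sm (of_real (1 / C)) f) -` {f\<in>F. N f \<le> 1}"
    then have f: "sm (of_real (1 / C)) f \<in> F" "N (sm (of_real (1 / C)) f) \<le> 1" by auto
    have ff: "f = sm (of_real C) (sm (of_real (1 / C)) f)" using Cpos by (simp add: sm_sm flip: of_real_mult)
    have fF: "f \<in> F" using subspD(3)[OF Fs f(1), of "of_real C"] ff by simp
    have "N (sm (of_real (1 / C)) f) = N f / C" using snormD(2)[OF Fn fF] Cpos by (simp add: norm_divide)
    then have "N f / C \<le> 1" using f(2) by simp
    then have "N f \<le> C" using Cpos by (simp add: divide_le_eq)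
    then show "f \<in> CB" unfolding CB_def using fF by simp
  qed
  have cont: "continuous_on UNIV (\<lambda>f::'a\<Rightarrow>complex. sm (of_real (1 / C)) f)"
    unfolding sm_def
    by (rule continuous_on_coordinatewise_then_product, rule continuous_on_mult_left)
       (rule continuous_on_product_coordinates)
  have "closed CB" unfolding CBeq by (rule closed_vimage[OF reg cont])
  then have gCB: "g \<in> CB" using gcl by simp
  then have gF: "g \<in> F" unfolding CB_def by simp
  have "\<Phi> \<phi> = \<phi> g" if \<phi>D: "\<phi> \<in> dual_space F N" for \<phi>
  proof (rule ccontr)
    assume ne: "\<Phi> \<phi> \<noteq> \<phi> g"
    define d where "d = cmod (\<Phi> \<phi> - \<phi> g)"
    have dpos: "d > 0" unfolding d_def using ne by simp
    define \<epsilon> where "\<epsilon> = d / (\<bar>C0\<bar> + N g + 1)"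
    have Ng: "0 \<le> N g" using nfsD(3)[OF nfs gF] .
    have \<epsilon>: "\<epsilon> > 0" unfolding \<epsilon>_def using dpos Ng by simp
    have "\<phi> \<in> eval_closed_span F N" using \<phi>D ecs by simp
    then obtain S a where S: "finite S" and close: "dual_norm F N (\<phi> - comb S a) < \<epsilon>"
      unfolding ecs_iff using \<epsilon> by blast
    have cD: "comb S a \<in> dual_space F N" by (rule comb_dual[OF nfs S])
    define ww where "ww = \<phi> - comb S a"
    have wwD: "ww \<in> dual_space F N" unfolding ww_def by (rule subspD(5)[OF Ds \<phi>D cD])
    have "\<Phi> ww = \<Phi> \<phi> - \<Phi> (comb S a)" unfolding ww_def by (rule clin_minus[OF clP Ds \<phi>D cD])
    moreover have "ww g = \<phi> g - comb S a g" unfolding ww_def by simp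
    ultimately have eq: "\<Phi> \<phi> - \<phi> g = \<Phi> ww - ww g" using PhiC[OF S] by simp
    have "d \<le> cmod (\<Phi> ww) + cmod (ww g)" unfolding d_def eq by (rule norm_triangle_ineq4)
    also have "cmod (\<Phi> ww) \<le> \<bar>C0\<bar> * dual_norm F N ww" by (rule C0'[OF wwD])
    also have "cmod (ww g) \<le> dual_norm F N ww * N g" by (rule DN_facts(2)[OF nfs wwD gF])
    also have "\<bar>C0\<bar> * dual_norm F N ww + dual_norm F N ww * N g = dual_norm F N ww * (\<bar>C0\<bar> + N g)"
      by (simp add: algebra_simps)
    also have "\<dots> \<le> \<epsilon> * (\<bar>C0\<bar> + N g)" using close Ng unfolding ww_def by (intro mult_right_mono) auto
    also have "\<dots> < \<epsilon> * (\<bar>C0\<bar> + N g + 1)" using \<epsilon> by simp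
    also have "\<dots> = d" unfolding \<epsilon>_def using Ng by simp
    finally show False by simp
  qed
  then show ?thesis using gF by blast
qed

theorem proposition5p1:
  fixes F :: "('x \<Rightarrow> complex) set" and N :: "('x \<Rightarrow> complex) \<Rightarrow> real"
  assumes "normed_function_space F N"
  shows "reflexive_fs F N \<longleftrightarrow> (regular_fs F N \<and> eval_closed_span F N = dual_space F N)"
proof
  assume "reflexive_fs F N"
  then have refl: "\<forall>\<Phi>\<in>bidual_space F N. \<exists>f\<in>F. \<forall>\<phi>\<in>dual_space F N. \<Phi> \<phi> = \<phi> f"
    unfolding reflexive_fs_def .
  show "regular_fs F N \<and> eval_closed_span F N = dual_space F N"
    unfolding regular_fs_def using fwd_regular[OF assms refl] fwd_span[OF assms refl] by blast
next
  assume h: "regular_fs F N \<and> eval_closed_span F N = dual_space F N"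
  show "reflexive_fs F N" unfolding reflexive_fs_def
  proof
    fix \<Phi> assume "\<Phi> \<in> bidual_space F N"
    then show "\<exists>f\<in>F. \<forall>\<phi>\<in>dual_space F N. \<Phi> \<phi> = \<phi> f"
      using bwd[OF assms] h unfolding regular_fs_def by blast
  qed
qed

end
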